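(* Let $q$ be a power of an odd prime $p$, $G=\mathrm{SU}_3(q)$, and let $\mathcal{C}=C_2^{(0)}$. Then $K_{\mathcal{C}}$ is irreducible.
   Context: $\mathrm{SU}_3(q)$ is the group of determinant-one matrices $M\in\mathrm{GL}_3(q^2)$ with $M^*JM=J$, where $J$ has ones on the anti-diagonal and zeros elsewhere and $M^*$ is the transpose of $M$ with every entry raised to the $q$-th power. $C_2^{(0)}$ is the $\mathrm{SU}_3(q)$-conjugacy class containing the matrices $\begin{pmatrix}1&0&a\\0&1&0\\0&0&1\end{pmatrix}$ with $a\in\mathbb{F}_{q^2}^\times$, $a+a^q=0$. For a finite group $G$ and a subset $\mathcal{C}\subseteq G\setminus\{1\}$ closed under conjugation, the Killing form is $K_{\mathcal{C}}(a,b)=|C_G(ab)\cap\mathcal{C}|$ on the basis $\mathcal{C}$; it is irreducible if the graph with vertex set $\mathcal{C}$, in which distinct $a,b$ are adjacent iff $C_G(ab)\cap\mathcal{C}\neq\emptyset$, is connected. *)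

theory Defs
  imports "HOL-Analysis.Analysis"
begin

text \<open>3x3 matrices over a finite field 'a of order q^2 (q a prime power).
  Indices of type 3 are 0, 1, 2.\<close>

definition antidiag_J :: "'a::field ^3^3" where
  "antidiag_J = (\<chi> i j. if (i = 0 \<and> j = 2) \<or> (i = 1 \<and> j = 1) \<or> (i = 2 \<and> j = 0)
                         then 1 else 0)"

definition frob_transpose :: "nat \<Rightarrow> 'a::field ^3^3 \<Rightarrow> 'a ^3^3" where
  "frob_transpose q M = (\<chi> i j. (M $ j $ i) ^ q)"

definition SU3 :: "nat \<Rightarrow> ('a::field ^3^3) set" where
  "SU3 q = {M. det M = 1 \<and> frob_transpose q M ** antidiag_J ** M = antidiag_J}"

definition transvection :: "'a::field \<Rightarrow> 'a ^3^3" where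
  "transvection a = (\<chi> i j. if i = j then 1 else if i = 0 \<and> j = 2 then a else 0)"

definition conj_class :: "('a::field ^3^3) set \<Rightarrow> 'a ^3^3 \<Rightarrow> ('a ^3^3) set" where
  "conj_class G x = {g ** x ** matrix_inv g | g. g \<in> G}"

definition centralizer :: "('a::field ^3^3) set \<Rightarrow> 'a ^3^3 \<Rightarrow> ('a ^3^3) set" where
  "centralizer G x = {g \<in> G. g ** x = x ** g}"

definition C20 :: "nat \<Rightarrow> ('a::field ^3^3) set" where
  "C20 q = (\<Union>a \<in> {a. a \<noteq> 0 \<and> a + a ^ q = 0}. conj_class (SU3 q) (transvection a))"

text \<open>Commuting graph underlying the Killing form K_C: vertices C, distinct a b adjacent
  iff C_G(ab) meets C.\<close>
definition killing_edges :: "('a::field ^3^3) set \<Rightarrow> ('a ^3^3) set \<Rightarrow> (('a ^3^3) \<times> ('a ^3^3)) set" where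
  "killing_edges G C = {(a, b). a \<in> C \<and> b \<in> C \<and> a \<noteq> b \<and> centralizer G (a ** b) \<inter> C \<noteq> {}}"

definition killing_irreducible :: "('a::field ^3^3) set \<Rightarrow> ('a ^3^3) set \<Rightarrow> bool" where
  "killing_irreducible G C \<longleftrightarrow> (\<forall>a \<in> C. \<forall>b \<in> C. (a, b) \<in> (killing_edges G C)\<^sup>*)"

end

theory Submission
  imports Defs "HOL-Number_Theory.Residues" "HOL-Computational_Algebra.Primes" begin

definition cjv :: "nat \<Rightarrow> 'a::field^3 \<Rightarrow> 'a^3" where "cjv q v = (\<chi> i. (v$i)^q)"
definition ffv :: "nat \<Rightarrow> 'a::field^3 \<Rightarrow> 'a^3" where "ffv q v = antidiag_J *v cjv q v"
definition dp :: "'a::field^3 \<Rightarrow> 'a^3 \<Rightarrow> 'a" where "dp u w = u$1*w$1 + u$2*w$2 + u$3*w$3"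
definition Tr :: "nat \<Rightarrow> 'a::field \<Rightarrow> 'a^3 \<Rightarrow> 'a^3^3" where
  "Tr q a v = (\<chi> i j. (if i = j then 1 else 0) + a * v$i * ffv q v $ j)"
definition e0 :: "'a::field^3" where "e0 = (\<chi> i. if i = 0 then 1 else 0)"
definition fm :: "nat \<Rightarrow> 'a::field^3^3 \<Rightarrow> 'a^3^3" where "fm q M = (\<chi> i j. (M$i$j)^q)"

lemma ffv_nth [simp]: "ffv q v $ 1 = (v$1)^q" "ffv q v $ 2 = (v$3)^q" "ffv q v $ 3 = (v$2)^q"
  by (simp_all add: ffv_def cjv_def antidiag_J_def matrix_vector_mult_def sum_3)

lemma Tr_act: "Tr q a v *v u = u + (a * dp (ffv q v) u) *s v"
  by (simp add: vec_eq_iff Tr_def matrix_vector_mult_def sum_3 dp_def forall_3 algebra_simps)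

lemma dp_add2 [simp]: "dp f (x + y) = dp f x + dp f y"
  by (simp add: dp_def algebra_simps)
lemma dp_smult2 [simp]: "dp f (c *s x) = c * dp f x"
  by (simp add: dp_def algebra_simps)
lemma dp_mv: "dp x (A *v w) = dp (transpose A *v x) w"
  by (simp add: dp_def matrix_vector_mult_def transpose_def sum_3 algebra_simps)
lemma mv_smult: "A *v (c *s x) = c *s (A *v (x::'a::field^3))"
  by (simp add: vec_eq_iff matrix_vector_mult_def sum_3 algebra_simps)

lemma J_J: "antidiag_J ** antidiag_J = (mat 1 :: 'a::field^3^3)"
  by (simp add: antidiag_J_def matrix_matrix_mult_def vec_eq_iff forall_3 sum_3 mat_def)
lemma J_transpose: "transpose antidiag_J = (antidiag_J :: 'a::field^3^3)"
  by (simp add: antidiag_J_def transpose_def vec_eq_iff forall_3)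

context
  fixes q :: nat
  assumes fadd: "\<And>x y::'a::field. (x + y)^q = x^q + y^q"
  and finv: "\<And>x::'a. (x^q)^q = x"
  and qodd: "odd q"
begin

lemma qpos: "q > 0" using qodd by (cases q) auto
lemma fzero [simp]: "(0::'a)^q = 0" using qpos by simp
lemma fneg: "(-x::'a)^q = - (x^q)" using qodd by simp

lemma fsum: "(sum f A :: 'a)^q = sum (\<lambda>i. f i ^ q) A"
proof (induction A rule: infinite_finite_induct)
  case (insert x F) then show ?case by (simp add: fadd)
qed simp_all

lemma herm: "dp (ffv q w) (v::'a^3) = (dp (ffv q v) w)^q"
  by (simp add: dp_def fadd power_mult_distrib finv algebra_simps)

lemma dp_ffv_lin: "dp (ffv q (v + c *s w)) (x::'a^3) = dp (ffv q v) x + c^q * dp (ffv q w) x"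
  by (simp add: dp_def fadd power_mult_distrib algebra_simps)

lemma cjv_mv: "cjv q (A *v v) = fm q A *v cjv q (v::'a^3)"
  by (simp add: cjv_def fm_def matrix_vector_mult_def vec_eq_iff fsum power_mult_distrib)

lemma ft_mul: "frob_transpose q (A ** B) = frob_transpose q B ** frob_transpose q (A :: 'a^3^3)"
  by (simp add: frob_transpose_def matrix_matrix_mult_def vec_eq_iff fsum power_mult_distrib mult.commute)

lemma ft_one: "frob_transpose q (mat 1) = (mat 1 :: 'a^3^3)"
  by (simp add: frob_transpose_def vec_eq_iff mat_def)

lemma ft_fm: "frob_transpose q M = transpose (fm q (M::'a^3^3))"
  by (simp add: frob_transpose_def fm_def transpose_def)

lemma G_mul:
  assumes "A \<in> SU3 q" "B \<in> (SU3 q :: ('a^3^3) set)"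
  shows "A ** B \<in> SU3 q"
proof -
  have dA: "det A = 1" and hA: "frob_transpose q A ** antidiag_J ** A = antidiag_J"
    using assms by (auto simp: SU3_def)
  have dB: "det B = 1" and hB: "frob_transpose q B ** antidiag_J ** B = antidiag_J"
    using assms by (auto simp: SU3_def)
  have "frob_transpose q (A ** B) ** antidiag_J ** (A ** B)
      = frob_transpose q B ** (frob_transpose q A ** antidiag_J ** A) ** B"
    by (simp add: ft_mul matrix_mul_assoc)
  also have "\<dots> = antidiag_J" using hA hB by simp
  finally show ?thesis using dA dB by (simp add: SU3_def det_mul)
qed

lemma G_inv:
  assumes "g \<in> (SU3 q :: ('a^3^3) set)"
  shows "g ** matrix_inv g = mat 1" "matrix_inv g ** g = mat 1" "matrix_inv g \<in> SU3 q"
proof -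
  have dg: "det g = 1" and hg: "frob_transpose q g ** antidiag_J ** g = antidiag_J"
    using assms by (auto simp: SU3_def)
  have "invertible g" using dg by (simp add: invertible_det_nz)
  then have "\<exists>A'. g ** A' = mat 1 \<and> A' ** g = mat 1" by (simp add: invertible_def)
  then have *: "g ** matrix_inv g = mat 1 \<and> matrix_inv g ** g = mat 1"
    unfolding matrix_inv_def by (rule someI_ex)
  then show 1: "g ** matrix_inv g = mat 1" and "matrix_inv g ** g = mat 1" by auto
  have "det g * det (matrix_inv g) = 1" using 1 by (metis det_I det_mul)
  then have d: "det (matrix_inv g) = 1" using dg by simp
  have "frob_transpose q (matrix_inv g) ** antidiag_J ** matrix_inv g
     = frob_transpose q (matrix_inv g) ** (frob_transpose q g ** antidiag_J ** g) ** matrix_inv g"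
    using hg by simp
  also have "\<dots> = frob_transpose q (g ** matrix_inv g) ** antidiag_J ** (g ** matrix_inv g)"
    by (simp add: ft_mul matrix_mul_assoc)
  also have "\<dots> = antidiag_J" using 1 by (simp add: ft_one)
  finally show "matrix_inv g \<in> SU3 q" using d by (simp add: SU3_def)
qed

lemma t_in_G:
  assumes "(a::'a)^q = - a"
  shows "transvection a \<in> SU3 q"
proof -
  have "det (transvection a) = 1"
    by (simp add: det_3 transvection_def)
  moreover have "frob_transpose q (transvection a) ** antidiag_J ** transvection a = antidiag_J"
    unfolding vec_eq_iff forall_3
    by (simp add: assms transvection_def frob_transpose_def antidiag_J_def
      matrix_matrix_mult_def sum_3)
  ultimately show ?thesis by (simp add: SU3_def)
qed

lemma G_pres:
  assumes "g \<in> (SU3 q :: ('a^3^3) set)"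
  shows "dp (ffv q (g *v u)) (g *v w) = dp (ffv q u) w"
proof -
  have hg: "transpose (fm q g) ** antidiag_J ** g = antidiag_J"
    using assms by (simp add: SU3_def ft_fm)
  then have "transpose (transpose (fm q g) ** antidiag_J ** g) = antidiag_J"
    by (simp add: J_transpose)
  then have h2: "transpose g ** antidiag_J ** fm q g = antidiag_J"
    by (simp add: matrix_transpose_mul J_transpose matrix_mul_assoc)
  have "dp (ffv q (g *v u)) (g *v w) = dp (transpose g *v (antidiag_J *v (fm q g *v cjv q u))) w"
    by (simp add: dp_mv ffv_def cjv_mv)
  also have "\<dots> = dp ((transpose g ** antidiag_J ** fm q g) *v cjv q u) w"
    by (simp add: matrix_vector_mul_assoc matrix_mul_assoc)
  also have "\<dots> = dp (ffv q u) w" using h2 by (simp add: ffv_def)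
  finally show ?thesis .
qed

lemma Tr_conj:
  assumes "g \<in> (SU3 q :: ('a^3^3) set)"
  shows "g ** Tr q a v = Tr q a (g *v v) ** g"
  unfolding matrix_eq
proof
  fix u
  show "(g ** Tr q a v) *v u = (Tr q a (g *v v) ** g) *v u"
    by (simp add: matrix_vector_mul_assoc[symmetric] Tr_act matrix_vector_right_distrib
        mv_smult G_pres[OF assms])
qed

lemma Tr_e0: "Tr q a e0 = transvection (a::'a)"
  by (simp add: vec_eq_iff forall_3 Tr_def e0_def transvection_def)

lemma conj_eq:
  assumes "g \<in> (SU3 q :: ('a^3^3) set)"
  shows "g ** transvection a ** matrix_inv g = Tr q a (g *v e0)"
proof -
  have "g ** transvection a ** matrix_inv g = Tr q a (g *v e0) ** (g ** matrix_inv g)"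
    by (simp add: Tr_e0[symmetric] Tr_conj[OF assms] matrix_mul_assoc)
  then show ?thesis using G_inv(1)[OF assms] by simp
qed

lemma C20_char:
  "x \<in> (C20 q :: ('a^3^3) set) \<longleftrightarrow>
     (\<exists>a g. a \<noteq> 0 \<and> a + a^q = 0 \<and> g \<in> SU3 q \<and> x = Tr q a (g *v e0))"
proof
  assume "x \<in> C20 q"
  then obtain a g where h: "a \<noteq> 0" "a + a^q = 0" "g \<in> SU3 q"
      "x = g ** transvection a ** matrix_inv g"
    unfolding C20_def conj_class_def by blast
  then have "x = Tr q a (g *v e0)" using conj_eq by simp
  with h show "\<exists>a g. a \<noteq> 0 \<and> a + a^q = 0 \<and> g \<in> SU3 q \<and> x = Tr q a (g *v e0)"
    by blast
next
  assume "\<exists>a g. a \<noteq> 0 \<and> a + a^q = 0 \<and> g \<in> SU3 q \<and> x = Tr q a (g *v e0)"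
  then obtain a g where h: "a \<noteq> 0" "a + a^q = 0" "g \<in> SU3 q" "x = Tr q a (g *v e0)"
    by blast
  then have "x = g ** transvection a ** matrix_inv g" using conj_eq by simp
  then show "x \<in> C20 q" unfolding C20_def conj_class_def using h by blast
qed

lemma Tr_in_G:
  assumes "g \<in> (SU3 q :: ('a^3^3) set)" "a + a^q = 0"
  shows "Tr q a (g *v e0) \<in> SU3 q"
proof -
  have "a^q = -a" using assms(2) by (simp add: eq_neg_iff_add_eq_0 add.commute)
  then have "transvection a \<in> SU3 q" by (rule t_in_G)
  then have "g ** transvection a \<in> SU3 q" using assms(1) by (rule G_mul[rotated])
  then have "g ** transvection a ** matrix_inv g \<in> SU3 q"
    using G_inv(3)[OF assms(1)] by (rule G_mul)
  then show ?thesis using conj_eq[OF assms(1)] by simp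
qed

lemma iso: "g \<in> (SU3 q :: ('a^3^3) set) \<Longrightarrow> dp (ffv q (g *v e0)) (g *v e0) = 0"
  by (simp add: G_pres) (simp add: dp_def e0_def)


lemma TrV:
  fixes u v w :: "'a^3"
  shows "Tr q c (v + g *s w) *v (u + s *s v + t *s w) =
     u + (s + c * (dp (ffv q v) u + s * dp (ffv q v) v + t * dp (ffv q v) w
          + g^q * (dp (ffv q w) u + s * dp (ffv q w) v + t * dp (ffv q w) w))) *s v
       + (t + c * g * (dp (ffv q v) u + s * dp (ffv q v) v + t * dp (ffv q v) w
          + g^q * (dp (ffv q w) u + s * dp (ffv q w) v + t * dp (ffv q w) w))) *s w"
  unfolding Tr_act dp_ffv_lin
  by (simp add: vec_eq_iff algebra_simps)

lemma vec_rep_eq: "s1 = s2 \<Longrightarrow> t1 = t2 \<Longrightarrow> (u::'a^3) + s1 *s v + t1 *s w = u + s2 *s v + t2 *s w"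
  by simp

lemma key_comm:
  fixes u v w :: "'a^3"
  assumes vv: "dp (ffv q v) v = 0" and ww: "dp (ffv q w) w = 0"
  and B: "dp (ffv q v) w = B" and D: "dp (ffv q w) v = D"
  and nz: "b \<noteq> 0" "B \<noteq> 0" "D \<noteq> 0" "(2::'a) \<noteq> 0"
  and a': "a' = -4/(b*B*D)"
  and gq: "(-(b/2)*D)^q = b*B/2"
  shows "Tr q a' (v + (-(b/2)*D) *s w) ** (Tr q a' v ** Tr q b w)
       = (Tr q a' v ** Tr q b w) ** Tr q a' (v + (-(b/2)*D) *s w)"
  unfolding matrix_eq
proof
  fix u
  define f1 where "f1 = dp (ffv q v) u"
  define f2 where "f2 = dp (ffv q w) u"
  have stepV: "\<And>c s t. Tr q c v *v (u + s *s v + t *s w) = u + (s + c*(f1 + t*B)) *s v + t *s w"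
    by (simp add: Tr_act vv B f1_def vec_eq_iff algebra_simps)
  have stepW: "\<And>c s t. Tr q c w *v (u + s *s v + t *s w) = u + s *s v + (t + c*(f2 + s*D)) *s w"
    by (simp add: Tr_act ww D f2_def vec_eq_iff algebra_simps)
  have stepZ: "\<And>c g s t. Tr q c (v + g *s w) *v (u + s *s v + t *s w) =
     u + (s + c * (f1 + t * B + g^q * (f2 + s * D))) *s v
       + (t + c * g * (f1 + t * B + g^q * (f2 + s * D))) *s w"
    by (simp add: TrV vv ww B D f1_def f2_def)
  have u0: "u = u + 0 *s v + 0 *s w" by simp
  have four: "(4::'a) \<noteq> 0"
  proof -
    have h: "(2::'a) * 2 \<noteq> 0" using nz(4) no_zero_divisors by blast
    have "(2::'a) * 2 = 4" by simp
    with h show ?thesis by metis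
  qed
  have eight: "(8::'a) \<noteq> 0"
  proof -
    have h: "(2::'a) * 4 \<noteq> 0" using nz(4) four no_zero_divisors by blast
    have "(2::'a) * 4 = 8" by simp
    with h show ?thesis by metis
  qed
  have sixteen: "(16::'a) \<noteq> 0"
  proof -
    have h: "(4::'a) * 4 \<noteq> 0" using four no_zero_divisors by blast
    have "(4::'a) * 4 = 16" by simp
    with h show ?thesis by metis
  qed
  have L: "(Tr q a' (v + (-(b/2)*D) *s w) ** (Tr q a' v ** Tr q b w)) *v u =
    Tr q a' (v + (-(b/2)*D) *s w) *v (Tr q a' v *v (Tr q b w *v (u + 0 *s v + 0 *s w)))"
    by (simp only: u0[symmetric] matrix_vector_mul_assoc matrix_mul_assoc)
  have R: "((Tr q a' v ** Tr q b w) ** Tr q a' (v + (-(b/2)*D) *s w)) *v u =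
    Tr q a' v *v (Tr q b w *v (Tr q a' (v + (-(b/2)*D) *s w) *v (u + 0 *s v + 0 *s w)))"
    by (simp only: u0[symmetric] matrix_vector_mul_assoc matrix_mul_assoc)
  show "(Tr q a' (v + (-(b/2)*D) *s w) ** (Tr q a' v ** Tr q b w)) *v u
       = ((Tr q a' v ** Tr q b w) ** Tr q a' (v + (-(b/2)*D) *s w)) *v u"
    unfolding L R stepV stepW stepZ gq
    apply (rule vec_rep_eq)
    using nz four eight sixteen unfolding a' by (simp_all add: field_simps)
qed


lemma Tr_comm0:
  assumes "dp (ffv q v) w = 0" "dp (ffv q w) v = (0::'a::field)"
  shows "Tr q a v ** Tr q b w = Tr q b w ** Tr q a v"
  unfolding matrix_eq
proof
  fix u
  show "(Tr q a v ** Tr q b w) *v u = (Tr q b w ** Tr q a v) *v u"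
    using assms by (simp add: matrix_vector_mul_assoc[symmetric] Tr_act add_ac)
qed


lemma four_nz: "(2::'a) \<noteq> 0 \<Longrightarrow> (4::'a) \<noteq> 0"
proof -
  assume h0: "(2::'a) \<noteq> 0"
  have h: "(2::'a) * 2 \<noteq> 0" using h0 no_zero_divisors by blast
  have "(2::'a) * 2 = 4" by simp
  with h show ?thesis by metis
qed

lemma two_pow: "(2::'a)^q = 2"
  using fadd[of 1 1] by simp

lemma four_pow: "(4::'a)^q = 4"
proof -
  have "(4::'a) = 2 * 2" by simp
  then show ?thesis by (simp only: power_mult_distrib two_pow)
qed

lemma C_sub_G: "x \<in> (C20 q :: ('a^3^3) set) \<Longrightarrow> x \<in> SU3 q"
proof -
  assume "x \<in> C20 q"
  then obtain a g where "a + a^q = 0" "g \<in> SU3 q" "x = Tr q a (g *v e0)"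
    using C20_char by blast
  then show ?thesis using Tr_in_G by simp
qed

lemma edge_comm:
  assumes "x \<in> (C20 q :: ('a^3^3) set)" "y \<in> C20 q" "x ** y = y ** x"
  shows "(x, y) \<in> (killing_edges (SU3 q) (C20 q))\<^sup>*"
proof (cases "x = y")
  case True then show ?thesis by simp
next
  case False
  have "x \<in> SU3 q" using assms(1) by (rule C_sub_G)
  moreover have "x ** (x ** y) = (x ** y) ** x"
  proof -
    have "(x ** y) ** x = x ** (y ** x)" by (simp add: matrix_mul_assoc)
    also have "\<dots> = x ** (x ** y)" using assms(3) by simp
    finally show ?thesis by simp
  qed
  ultimately have "x \<in> centralizer (SU3 q) (x ** y) \<inter> C20 q"
    using assms(1) by (simp add: centralizer_def)
  then have "(x, y) \<in> killing_edges (SU3 q) (C20 q)"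
    using assms False unfolding killing_edges_def by blast
  then show ?thesis by blast
qed

lemma main_conn:
  assumes two: "(2::'a) \<noteq> 0"
  and xC: "x \<in> (C20 q :: ('a^3^3) set)" and yC: "y \<in> C20 q"
  shows "(x, y) \<in> (killing_edges (SU3 q) (C20 q))\<^sup>*"
proof -
  obtain a g where ha: "a \<noteq> 0" "a + a^q = 0" "g \<in> SU3 q" "x = Tr q a (g *v e0)"
    using xC C20_char by blast
  obtain b h where hb: "b \<noteq> 0" "b + b^q = 0" "h \<in> SU3 q" "y = Tr q b (h *v e0)"
    using yC C20_char by blast
  define v where "v = g *v e0"
  define w where "w = h *v e0"
  have vv: "dp (ffv q v) v = 0" unfolding v_def using ha(3) by (rule iso)
  have ww: "dp (ffv q w) w = 0" unfolding w_def using hb(3) by (rule iso)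
  define B where "B = dp (ffv q v) w"
  define D where "D = dp (ffv q w) v"
  have DB: "D = B^q" unfolding D_def B_def by (rule herm)
  have BD: "B = D^q" unfolding DB by (simp add: finv)
  show ?thesis
  proof (cases "B = 0")
    case True
    then have "D = 0" using DB by simp
    then have "Tr q a v ** Tr q b w = Tr q b w ** Tr q a v"
      using True unfolding B_def D_def by (intro Tr_comm0) assumption+
    then have "x ** y = y ** x" using ha(4) hb(4) unfolding v_def w_def by simp
    then show ?thesis using xC yC by (rule edge_comm[rotated 2])
  next
    case False
    have Dnz: "D \<noteq> 0" using False BD qpos by auto
    have bq: "b^q = -b" using hb(2) by (simp add: eq_neg_iff_add_eq_0 add.commute)
    define a' where "a' = -4/(b*B*D)"
    have a'nz: "a' \<noteq> 0" unfolding a'_def using hb(1) False Dnz four_nz[OF two] by (simp only: divide_eq_0_iff mult_eq_0_iff neg_equal_0_iff_equal de_Morgan_disj) simp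
    have a'q: "a'^q = - a'"
    proof -
      have "a'^q = (-4)^q / (b^q * B^q * D^q)" unfolding a'_def by (simp only: power_divide power_mult_distrib)
      also have "\<dots> = -4 / ((-b) * D * B)" by (simp only: fneg four_pow bq DB[symmetric] BD[symmetric])
      also have "\<dots> = - a'" unfolding a'_def by (simp add: mult_ac)
      finally show ?thesis .
    qed
    have a'C: "a' + a'^q = 0" using a'q by simp
    define x' where "x' = Tr q a' v"
    have x'C: "x' \<in> C20 q" unfolding C20_char x'_def v_def
      using a'nz a'C ha(3) by (intro exI[of _ a'] exI[of _ g]) simp
    have xx': "(x, x') \<in> (killing_edges (SU3 q) (C20 q))\<^sup>*"
    proof -
      have "Tr q a v ** Tr q a' v = Tr q a' v ** Tr q a v"
        by (rule Tr_comm0[OF vv vv])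
      then have "x ** x' = x' ** x" unfolding x'_def using ha(4) unfolding v_def by simp
      then show ?thesis using xC x'C by (rule edge_comm[rotated 2])
    qed
    define M where "M = Tr q (-(b/2)) w"
    have mbq: "(-(b/2))^q = b/2"
    proof -
      have "(-(b/2))^q = - (b^q / 2^q)" by (simp only: fneg power_divide)
      then show ?thesis by (simp only: two_pow bq) simp
    qed
    have MG: "M \<in> SU3 q" unfolding M_def w_def
      by (rule Tr_in_G[OF hb(3)]) (simp add: mbq)
    have Mv: "(M ** g) *v e0 = v + (-(b/2)*D) *s w"
    proof -
      have "(M ** g) *v e0 = M *v v" by (simp only: matrix_vector_mul_assoc[symmetric] v_def)
      also have "\<dots> = v + (-(b/2)*D) *s w" by (simp only: M_def Tr_act D_def)
      finally show ?thesis .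
    qed
    define c where "c = Tr q a' (v + (-(b/2)*D) *s w)"
    have cC: "c \<in> C20 q" unfolding C20_char c_def Mv[symmetric]
      using a'nz a'C G_mul[OF MG ha(3)] by (intro exI[of _ a'] exI[of _ "M ** g"]) simp
    have cG: "c \<in> SU3 q" using cC by (rule C_sub_G)
    have gq: "(-(b/2)*D)^q = b*B/2"
      by (simp only: power_mult_distrib mbq BD[symmetric]) simp
    have comm: "c ** (x' ** y) = (x' ** y) ** c"
      unfolding c_def x'_def hb(4) w_def[symmetric]
      by (rule key_comm[OF vv ww B_def[symmetric] D_def[symmetric] hb(1) False Dnz two a'_def gq])
    have x'y: "(x', y) \<in> (killing_edges (SU3 q) (C20 q))\<^sup>*"
    proof (cases "x' = y")
      case True then show ?thesis by simp
    next
      case False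
      have "c \<in> centralizer (SU3 q) (x' ** y) \<inter> C20 q"
        using cG cC comm by (simp add: centralizer_def)
      then have "(x', y) \<in> killing_edges (SU3 q) (C20 q)"
        using x'C yC False unfolding killing_edges_def by blast
      then show ?thesis by blast
    qed
    show ?thesis using xx' x'y by (rule rtrancl_trans)
  qed
qed
end

lemma power_card_id:
  fixes x :: "'a::{finite,field}"
  shows "x ^ card (UNIV :: 'a set) = x"
proof (cases "x = 0")
  case False
  have "x * (\<Prod>y\<in>UNIV-{0}. x * y) = x * x ^ (card (UNIV :: 'a set) - 1) * \<Prod>(UNIV-{0})"
    by (simp add: prod.distrib mult_ac)
  also have "x * x ^ (card (UNIV :: 'a set) - 1) = x ^ Suc (card (UNIV :: 'a set) - 1)"
    by (subst power_Suc) auto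
  also have "Suc (card (UNIV :: 'a set) - 1) = card (UNIV :: 'a set)"
    using finite_UNIV_card_ge_0[where ?'a = 'a] by simp
  also have "(\<Prod>y\<in>UNIV-{0}. x * y) = (\<Prod>y\<in>UNIV-{0}. y)"
    by (rule prod.reindex_bij_witness[of _ "\<lambda>y. y / x" "\<lambda>y. x * y"]) (use False in auto)
  finally show ?thesis
    by simp
qed (use finite_UNIV_card_ge_0[where ?'a = 'a] in auto)

theorem corollary4p6:
  fixes p q k :: nat
  assumes "prime p" and "odd p" and "k \<ge> 1" and "q = p ^ k"
    and "CARD('a::{finite, field}) = q ^ 2"
  shows "killing_irreducible (SU3 q :: ('a ^3^3) set) (C20 q)"
proof -
  have fin: "finite (UNIV::'a set)" by simp
  have cpos: "CHAR('a) > 0" by (rule finite_imp_CHAR_pos[OF fin])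
  have cprime: "prime CHAR('a)" using cpos by (rule prime_CHAR_semidom)
  have "CHAR('a) dvd card (UNIV::'a set)" by (rule CHAR_dvd_CARD)
  then have "CHAR('a) dvd (p ^ k) ^ 2" using assms(4,5) by simp
  then have "CHAR('a) dvd p ^ k" using cprime prime_dvd_power by blast
  then have "CHAR('a) dvd p" using cprime prime_dvd_power by blast
  then have cp: "CHAR('a) = p" using primes_dvd_imp_eq[OF cprime assms(1)] by blast
  have fadd: "\<And>x y::'a. (x + y)^q = x^q + y^q"
    by (rule freshmans_dream') (use cprime cp assms(4) in simp_all)
  have finv: "\<And>x::'a. (x^q)^q = x"
  proof -
    fix x :: 'a
    have "(x^q)^q = x ^ card (UNIV :: 'a set)"
      using assms(5) by (simp add: power_mult[symmetric] power2_eq_square)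
    then show "(x^q)^q = x" by (simp add: power_card_id)
  qed
  have qodd: "odd q" using assms(2,4) by simp
  have two: "(2::'a) \<noteq> 0"
  proof
    assume "(2::'a) = 0"
    then have "(of_nat 2 :: 'a) = 0" by simp
    then have "p dvd 2" using cp of_nat_eq_0_iff_char_dvd by metis
    then have "p \<le> 2" by (simp add: dvd_imp_le)
    moreover have "p \<ge> 2" using assms(1) prime_ge_2_nat by blast
    ultimately have "p = 2" by simp
    then show False using assms(2) by simp
  qed
  show ?thesis
    unfolding killing_irreducible_def
    using main_conn[of q, OF fadd finv qodd two] by blast
qed

end
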